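(* Let $\Gamma=(V,m,\tau)$ be a weak $W$-graph and let $A\subseteq\Delta$. Then the image of the operator $R(A)=\frac{1}{|W(A)|}\sum_{g\in W(A)}\operatorname{sgn}(g)\,g$ acting on $\mathbb{C}V$ is exactly the span of $V(A,-)=\{v\in V: A\subseteq\tau(v)\}$.
   Context: $W$ is a Weyl group with a fixed set $\Delta$ of simple roots; for a root $\alpha$, $s_\alpha$ is the reflection in the hyperplane orthogonal to $\alpha$, and $\operatorname{sgn}:W\to\{\pm1\}$ is the sign character ($\operatorname{sgn}(s_\alpha)=-1$). A weak $W$-graph is a triple $\Gamma=(V,m,\tau)$ where $V$ is a finite set, $m:V\times V\to\mathbb{C}$ is a map, and $\tau$ is a map from $V$ to the power set of $\Delta$, such that the linear maps $s_\alpha:\mathbb{C}V\to\mathbb{C}V$ ($\alpha\in\Delta$) given on basis vectors by $s_\alpha(v)=-v$ if $\alpha\in\tau(v)$ and $s_\alpha(v)=v-\sum_{u\in V,\ \alpha\in\tau(u)} m(u,v)u$ if $\alpha\notin\tau(v)$ define a representation of $W$ on $\mathbb{C}V$. For $A\subseteq\Delta$, $W(A)$ is the subgroup of $W$ generated by $\{s_\alpha:\alpha\in A\}$. *)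

theory Defs
  imports "HOL-Analysis.Analysis" "HOL-Library.Function_Algebras"
begin

definition refl :: "real^'n \<Rightarrow> real^'n \<Rightarrow> real^'n" where
  "refl \<alpha> x = x - (2 * (x \<bullet> \<alpha>) / (\<alpha> \<bullet> \<alpha>)) *\<^sub>R \<alpha>"

definition root_system :: "(real^'n) set \<Rightarrow> bool" where
  "root_system \<Phi> \<longleftrightarrow> finite \<Phi> \<and> 0 \<notin> \<Phi> \<and>
     (\<forall>\<alpha>\<in>\<Phi>. \<forall>\<beta>\<in>\<Phi>. refl \<alpha> \<beta> \<in> \<Phi>) \<and>
     (\<forall>\<alpha>\<in>\<Phi>. \<forall>\<beta>\<in>\<Phi>. 2 * (\<beta> \<bullet> \<alpha>) / (\<alpha> \<bullet> \<alpha>) \<in> \<int>) \<and>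
     (\<forall>\<alpha>\<in>\<Phi>. \<forall>c. c *\<^sub>R \<alpha> \<in> \<Phi> \<longrightarrow> c = 1 \<or> c = -1)"

definition simple_system :: "(real^'n) set \<Rightarrow> (real^'n) set \<Rightarrow> bool" where
  "simple_system \<Phi> \<Delta> \<longleftrightarrow> \<Delta> \<subseteq> \<Phi> \<and> independent \<Delta> \<and>
     (\<forall>\<beta>\<in>\<Phi>. \<exists>c :: real^'n \<Rightarrow> int. \<beta> = (\<Sum>\<alpha>\<in>\<Delta>. of_int (c \<alpha>) *\<^sub>R \<alpha>) \<and>
        ((\<forall>\<alpha>\<in>\<Delta>. c \<alpha> \<ge> 0) \<or> (\<forall>\<alpha>\<in>\<Delta>. c \<alpha> \<le> 0)))"

text \<open>W(A): the group generated by the reflections s_alpha, alpha in A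
  (each s_alpha is an involution, so the monoid closure is the generated group).
  The Weyl group is W = W(Delta).\<close>
inductive_set weyl_subgroup :: "(real^'n) set \<Rightarrow> (real^'n \<Rightarrow> real^'n) set"
  for A :: "(real^'n) set" where
  id_in: "id \<in> weyl_subgroup A"
| refl_comp: "g \<in> weyl_subgroup A \<Longrightarrow> \<alpha> \<in> A \<Longrightarrow> refl \<alpha> \<circ> g \<in> weyl_subgroup A"

text \<open>The sign character: the determinant (sgn(s_alpha) = -1).\<close>
definition sgn_W :: "(real^'n \<Rightarrow> real^'n) \<Rightarrow> real" where
  "sgn_W g = det (matrix g)"

definition CV :: "'v set \<Rightarrow> ('v \<Rightarrow> complex) set" where
  "CV V = {x. \<forall>u. u \<notin> V \<longrightarrow> x u = 0}"

definition basis_vec :: "'v \<Rightarrow> 'v \<Rightarrow> complex" where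
  "basis_vec v = (\<lambda>u. if u = v then 1 else 0)"

definition cscale :: "complex \<Rightarrow> ('v \<Rightarrow> complex) \<Rightarrow> ('v \<Rightarrow> complex)" where
  "cscale c x = (\<lambda>u. c * x u)"

text \<open>Action of s_alpha on the basis vector v.\<close>
definition wg_basis ::
  "'v set \<Rightarrow> ('v \<Rightarrow> 'v \<Rightarrow> complex) \<Rightarrow> ('v \<Rightarrow> 'a set) \<Rightarrow> 'a \<Rightarrow> 'v \<Rightarrow> ('v \<Rightarrow> complex)" where
  "wg_basis V m \<tau> \<alpha> v =
     (if \<alpha> \<in> \<tau> v then cscale (-1) (basis_vec v)
      else basis_vec v - (\<Sum>u\<in>{u\<in>V. \<alpha> \<in> \<tau> u}. cscale (m u v) (basis_vec u)))"

definition wg_op ::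
  "'v set \<Rightarrow> ('v \<Rightarrow> 'v \<Rightarrow> complex) \<Rightarrow> ('v \<Rightarrow> 'a set) \<Rightarrow> 'a \<Rightarrow> ('v \<Rightarrow> complex) \<Rightarrow> ('v \<Rightarrow> complex)" where
  "wg_op V m \<tau> \<alpha> x = (\<Sum>v\<in>V. cscale (x v) (wg_basis V m \<tau> \<alpha> v))"

definition W_graph_rep ::
  "(real^'n) set \<Rightarrow> 'v set \<Rightarrow> ('v \<Rightarrow> 'v \<Rightarrow> complex) \<Rightarrow> ('v \<Rightarrow> (real^'n) set)
    \<Rightarrow> ((real^'n \<Rightarrow> real^'n) \<Rightarrow> ('v \<Rightarrow> complex) \<Rightarrow> ('v \<Rightarrow> complex)) \<Rightarrow> bool" where
  "W_graph_rep \<Delta> V m \<tau> \<rho> \<longleftrightarrow>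
     (\<forall>x\<in>CV V. \<rho> id x = x) \<and>
     (\<forall>g\<in>weyl_subgroup \<Delta>. \<forall>h\<in>weyl_subgroup \<Delta>. \<forall>x\<in>CV V. \<rho> (g \<circ> h) x = \<rho> g (\<rho> h x)) \<and>
     (\<forall>\<alpha>\<in>\<Delta>. \<forall>x\<in>CV V. \<rho> (refl \<alpha>) x = wg_op V m \<tau> \<alpha> x)"

definition weak_W_graph ::
  "(real^'n) set \<Rightarrow> 'v set \<Rightarrow> ('v \<Rightarrow> 'v \<Rightarrow> complex) \<Rightarrow> ('v \<Rightarrow> (real^'n) set) \<Rightarrow> bool" where
  "weak_W_graph \<Delta> V m \<tau> \<longleftrightarrow> finite V \<and> (\<forall>v\<in>V. \<tau> v \<subseteq> \<Delta>) \<and>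
     (\<exists>\<rho>. W_graph_rep \<Delta> V m \<tau> \<rho>)"

definition R_op ::
  "(real^'n) set \<Rightarrow> ((real^'n \<Rightarrow> real^'n) \<Rightarrow> ('v \<Rightarrow> complex) \<Rightarrow> ('v \<Rightarrow> complex))
     \<Rightarrow> ('v \<Rightarrow> complex) \<Rightarrow> ('v \<Rightarrow> complex)" where
  "R_op A \<rho> x = cscale (1 / of_nat (card (weyl_subgroup A)))
       (\<Sum>g\<in>weyl_subgroup A. cscale (complex_of_real (sgn_W g)) (\<rho> g x))"

end

theory Submission
  imports Defs
begin

lemma cscale_apply[simp]: "cscale c x u = c * x u"
  by (simp add: cscale_def)

lemma sum_fun_apply: "(sum f S) u = (\<Sum>s\<in>S. f s u)"
  by (induction S rule: infinite_finite_induct) auto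

lemma module_cscale: "module cscale"
  by unfold_locales (auto simp: cscale_def fun_eq_iff algebra_simps)

lemma basis_vec_apply: "basis_vec v u = (if u = v then 1 else 0)"
  by (simp add: basis_vec_def)

lemma inj_basis_vec: "inj basis_vec"
  by (rule injI) (metis basis_vec_apply one_neq_zero)

lemma sum_basis_expand:
  assumes "finite T" "\<forall>u. u \<notin> T \<longrightarrow> x u = 0"
  shows "(\<Sum>t\<in>T. cscale (x t) (basis_vec t)) = x"
proof
  fix u
  show "(\<Sum>t\<in>T. cscale (x t) (basis_vec t)) u = x u"
  proof (cases "u \<in> T")
    case True
    have "(\<Sum>t\<in>T. x t * basis_vec t u) = (\<Sum>t\<in>{u}. x t * basis_vec t u)"
      by (rule sum.mono_neutral_right) (auto simp: assms True basis_vec_apply)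
    then show ?thesis by (simp add: sum_fun_apply basis_vec_apply)
  next
    case False
    then show ?thesis using assms by (auto simp: sum_fun_apply basis_vec_apply intro!: sum.neutral)
  qed
qed

lemma span_char:
  fixes T :: "'v set"
  assumes "finite T"
  shows "module.span cscale (basis_vec ` T) = {x. \<forall>u. u \<notin> T \<longrightarrow> x u = 0}"
proof -
  have fin: "finite (basis_vec ` T)" using assms by simp
  have sp: "module.span cscale (basis_vec ` T) = range (\<lambda>c. \<Sum>b\<in>basis_vec ` T. cscale (c b) b)"
    using module.span_finite[OF module_cscale fin] .
  have re: "(\<Sum>b\<in>basis_vec ` T. cscale (c b) b) = (\<Sum>t\<in>T. cscale (c (basis_vec t)) (basis_vec t))" for c
    by (rule sum.reindex_cong[OF inj_on_subset[OF inj_basis_vec]]) auto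
  show ?thesis
  proof (rule set_eqI, rule iffI)
    fix x :: "'v \<Rightarrow> complex" assume "x \<in> module.span cscale (basis_vec ` T)"
    then obtain c where "x = (\<Sum>t\<in>T. cscale (c (basis_vec t)) (basis_vec t))"
      using sp re by auto
    then show "x \<in> {x. \<forall>u. u \<notin> T \<longrightarrow> x u = 0}"
      by (auto simp: sum_fun_apply basis_vec_apply intro!: sum.neutral)
  next
    fix x :: "'v \<Rightarrow> complex" assume x: "x \<in> {x. \<forall>u. u \<notin> T \<longrightarrow> x u = 0}"
    let ?c = "\<lambda>b. x (inv basis_vec b)"
    have "x = (\<Sum>t\<in>T. cscale (?c (basis_vec t)) (basis_vec t))"
      using sum_basis_expand[OF assms, of x] x by (simp add: inv_f_f[OF inj_basis_vec])
    then show "x \<in> module.span cscale (basis_vec ` T)"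
      using sp re by auto
  qed
qed

lemma refl_linear: "linear (refl a)"
  unfolding refl_def
  by (intro linearI) (auto simp: inner_add_left algebra_simps add_divide_distrib)

lemma refl_inner:
  assumes "a \<noteq> 0" shows "refl a x \<bullet> refl a y = x \<bullet> y"
proof -
  have "a \<bullet> a \<noteq> 0" using assms by simp
  then show ?thesis unfolding refl_def
    by (simp add: inner_diff_left inner_diff_right inner_commute algebra_simps)
qed

lemma refl_refl:
  assumes "a \<noteq> 0" shows "refl a (refl a x) = x"
proof -
  have "a \<bullet> a \<noteq> 0" using assms by simp
  then show ?thesis unfolding refl_def
    by (simp add: inner_diff_left algebra_simps)
qed

lemma refl_scale:
  assumes "c \<noteq> 0" shows "refl (c *\<^sub>R a) = refl a"
  using assms unfolding refl_def by (auto simp: fun_eq_iff field_simps power2_eq_square)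

lemma det_refl_axis: "det (matrix (refl (axis k (1::real)) :: real^'n \<Rightarrow> real^'n)) = -1"
proof -
  let ?M = "matrix (refl (axis k (1::real)) :: real^'n \<Rightarrow> real^'n)"
  have ent: "?M $ i $ j = (if i = j then (if i = k then -1 else 1) else 0)" for i j
    by (simp add: matrix_def refl_def inner_axis_axis) (simp add: axis_def)
  have "det ?M = (\<Prod>i\<in>UNIV. ?M $ i $ i)"
    by (rule det_diagonal) (simp add: ent)
  also have "\<dots> = (\<Prod>i\<in>UNIV. if i = k then -1 else 1)"
    by (simp add: ent)
  also have "\<dots> = -1" by (subst prod.delta) auto
  finally show ?thesis .
qed

lemma det_refl:
  fixes a :: "real^'n"
  assumes "a \<noteq> 0" shows "det (matrix (refl a)) = -1"
proof -
  define u where "u = a /\<^sub>R norm a"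
  have nu: "norm u = 1" using assms by (simp add: u_def)
  have ru: "refl a = refl u"
    using refl_scale[of "inverse (norm a)" a] assms by (simp add: u_def divide_inverse_commute)
  obtain k :: 'n where True by simp
  obtain Q where Q: "orthogonal_matrix Q" "Q *v axis k 1 = u"
    using orthogonal_matrix_exists_basis[OF nu] by metis
  let ?e = "axis k (1::real) :: real^'n"
  have ee: "?e \<bullet> ?e = 1" by (simp add: inner_axis_axis)
  have QQ: "Q ** transpose Q = mat 1" using Q(1) by (simp add: orthogonal_matrix_def)
  have eq: "refl u = (\<lambda>x. Q *v x) \<circ> refl ?e \<circ> (\<lambda>x. transpose Q *v x)"
  proof
    fix x
    have "(transpose Q *v x) \<bullet> ?e = x \<bullet> u"
      by (simp add: transpose_matrix_vector dot_lmul_matrix Q(2))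
    moreover have "Q *v (transpose Q *v x) = x"
      by (simp only: matrix_vector_mul_assoc QQ matrix_vector_mul_lid)
    ultimately show "refl u x = ((\<lambda>x. Q *v x) \<circ> refl ?e \<circ> (\<lambda>x. transpose Q *v x)) x"
      using nu ee by (simp add: refl_def matrix_vector_mult_diff_distrib matrix_vector_mult_scaleR Q(2) norm_eq_1)
  qed
  have "matrix (refl u) = Q ** matrix (refl ?e) ** transpose Q"
    unfolding eq
    by (simp add: matrix_compose refl_linear linear_compose)
  then have "det (matrix (refl u)) = det Q * det (matrix (refl ?e)) * det (transpose Q)"
    by (simp add: det_mul)
  also have "\<dots> = - (det Q * det Q)" by (simp add: det_transpose det_refl_axis)
  also have "\<dots> = -1" using det_orthogonal_matrix[OF Q(1)] by auto
  finally show ?thesis by (simp add: ru)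
qed

lemma weyl_mono: "g \<in> weyl_subgroup A \<Longrightarrow> A \<subseteq> B \<Longrightarrow> g \<in> weyl_subgroup B"
  by (induction rule: weyl_subgroup.induct) (auto intro: weyl_subgroup.intros)

lemma refl_in_weyl: "\<alpha> \<in> A \<Longrightarrow> refl \<alpha> \<in> weyl_subgroup A"
  using weyl_subgroup.refl_comp[OF weyl_subgroup.id_in] by simp

lemma weyl_props:
  assumes "g \<in> weyl_subgroup \<Delta>" "\<Delta> \<subseteq> \<Phi>" "0 \<notin> \<Phi>"
    and cl: "\<forall>\<alpha>\<in>\<Phi>. \<forall>\<beta>\<in>\<Phi>. refl \<alpha> \<beta> \<in> \<Phi>"
  shows "linear g \<and> (\<forall>x y. g x \<bullet> g y = x \<bullet> y) \<and> g ` \<Phi> \<subseteq> \<Phi> \<and> (\<forall>x. g x - x \<in> span \<Phi>)"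
  using assms(1)
proof (induction rule: weyl_subgroup.induct)
  case id_in
  then show ?case using linear_id by (auto simp: id_def span_zero)
next
  case (refl_comp g \<alpha>)
  have a\<Phi>: "\<alpha> \<in> \<Phi>" using refl_comp assms by auto
  have a0: "\<alpha> \<noteq> 0" using a\<Phi> assms by auto
  have L: "linear (refl \<alpha> \<circ> g)" using refl_comp refl_linear linear_compose by blast
  have I: "\<forall>x y. (refl \<alpha> \<circ> g) x \<bullet> (refl \<alpha> \<circ> g) y = x \<bullet> y"
    using refl_comp refl_inner[OF a0] by simp
  have S: "(refl \<alpha> \<circ> g) ` \<Phi> \<subseteq> \<Phi>"
    using refl_comp cl a\<Phi> by auto
  have Sp: "(refl \<alpha> \<circ> g) x - x \<in> span \<Phi>" for x
  proof -
    have e1: "(refl \<alpha> \<circ> g) x - x = (refl \<alpha> (g x) - g x) + (g x - x)" by simp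
    have e2: "refl \<alpha> (g x) - g x = (- (2 * (g x \<bullet> \<alpha>) / (\<alpha> \<bullet> \<alpha>))) *\<^sub>R \<alpha>"
      unfolding refl_def by simp
    have "refl \<alpha> (g x) - g x \<in> span \<Phi>"
      unfolding e2 by (rule span_mul[OF span_base[OF a\<Phi>]])
    moreover have "g x - x \<in> span \<Phi>" using refl_comp by blast
    ultimately show ?thesis unfolding e1 by (rule span_add)
  qed
  show ?case using L I S Sp by blast
qed

lemma weyl_finite:
  assumes "\<Delta> \<subseteq> \<Phi>" "0 \<notin> \<Phi>" "finite \<Phi>"
    and cl: "\<forall>\<alpha>\<in>\<Phi>. \<forall>\<beta>\<in>\<Phi>. refl \<alpha> \<beta> \<in> \<Phi>"
  shows "finite (weyl_subgroup \<Delta>)"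
proof -
  note P = weyl_props[OF _ assms(1,2) cl]
  have inj: "inj_on (\<lambda>g. restrict g \<Phi>) (weyl_subgroup \<Delta>)"
  proof (rule inj_onI)
    fix g h assume g: "g \<in> weyl_subgroup \<Delta>" and h: "h \<in> weyl_subgroup \<Delta>"
      and eq: "restrict g \<Phi> = restrict h \<Phi>"
    have gh: "g \<beta> = h \<beta>" if "\<beta> \<in> \<Phi>" for \<beta>
    proof -
      have "restrict g \<Phi> \<beta> = restrict h \<Phi> \<beta>" using eq by simp
      then show ?thesis using that by simp
    qed
    have lg: "linear g" and ig: "\<And>x y. g x \<bullet> g y = x \<bullet> y" and sg: "g ` \<Phi> \<subseteq> \<Phi>"
      and spg: "\<And>x. g x - x \<in> span \<Phi>" using P[OF g] by blast+
    have ih: "\<And>x y. h x \<bullet> h y = x \<bullet> y" and sph: "\<And>x. h x - x \<in> span \<Phi>" using P[OF h] by blast+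
    have injg: "inj_on g \<Phi>"
    proof (rule inj_onI)
      fix a b assume "g a = g b"
      then have "g (a - b) = 0" using lg by (simp add: linear_diff)
      then have "(a - b) \<bullet> (a - b) = 0" using ig[of "a - b" "a - b"] by simp
      then show "a = b" by simp
    qed
    have surj: "g ` \<Phi> = \<Phi>" using endo_inj_surj[OF assms(3) sg injg] .
    show "g = h"
    proof (rule ext)
      fix x
      define y where "y = g x - h x"
      have yeq: "y = (g x - x) - (h x - x)" by (simp add: y_def)
      have ysp: "y \<in> span \<Phi>"
        unfolding yeq by (rule span_diff[OF spg[of x] sph[of x]])
      have orth: "orthogonal y \<beta>" if "\<beta> \<in> \<Phi>" for \<beta>
      proof -
        have "\<beta> \<in> g ` \<Phi>" using surj that by simp
        then obtain \<gamma> where \<gamma>2: "\<beta> = g \<gamma>" and \<gamma>1: "\<gamma> \<in> \<Phi>" by (rule imageE)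
        note \<gamma> = \<gamma>1 \<gamma>2
        have "y \<bullet> \<beta> = g x \<bullet> g \<gamma> - h x \<bullet> h \<gamma>"
          unfolding y_def \<gamma>(2) inner_diff_left gh[OF \<gamma>(1)] by (rule refl)
        also have "\<dots> = 0" unfolding ig ih by simp
        finally show ?thesis by (simp add: orthogonal_def)
      qed
      have "orthogonal y y" by (rule orthogonal_to_span[OF ysp orth])
      then have "y = 0" by (simp add: orthogonal_def)
      then show "g x = h x" by (simp add: y_def)
    qed
  qed
  have "(\<lambda>g. restrict g \<Phi>) ` weyl_subgroup \<Delta> \<subseteq> Pi\<^sub>E \<Phi> (\<lambda>_. \<Phi>)"
  proof
    fix f assume "f \<in> (\<lambda>g. restrict g \<Phi>) ` weyl_subgroup \<Delta>"
    then obtain g where g: "g \<in> weyl_subgroup \<Delta>" "f = restrict g \<Phi>" by blast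
    then have "g ` \<Phi> \<subseteq> \<Phi>" using P[OF g(1)] by blast
    then show "f \<in> Pi\<^sub>E \<Phi> (\<lambda>_. \<Phi>)" using g(2) by auto
  qed
  moreover have "finite (Pi\<^sub>E \<Phi> (\<lambda>_. \<Phi>))" using assms(3) by (simp add: finite_PiE)
  ultimately have "finite ((\<lambda>g. restrict g \<Phi>) ` weyl_subgroup \<Delta>)" by (rule finite_subset)
  then show ?thesis using finite_imageD[OF _ inj] by blast
qed

lemma sgn_id: "sgn_W (id :: real^'n \<Rightarrow> real^'n) = 1"
  by (simp add: sgn_W_def matrix_id_mat_1)

lemma sgn_step:
  fixes \<alpha> :: "real^'n"
  assumes "linear g" "\<alpha> \<noteq> 0"
  shows "sgn_W (refl \<alpha> \<circ> g) = - sgn_W g"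
  by (simp add: sgn_W_def matrix_compose[OF assms(1) refl_linear] det_mul det_refl[OF assms(2)])

lemma wg_op_apply: "finite V \<Longrightarrow> wg_op V m \<tau> \<alpha> x w = (\<Sum>v\<in>V. x v * wg_basis V m \<tau> \<alpha> v w)"
  by (simp add: wg_op_def sum_fun_apply)

lemma wg_basis_apply:
  assumes "finite V"
  shows "wg_basis V m \<tau> \<alpha> v w = (if \<alpha> \<in> \<tau> v then - basis_vec v w
      else basis_vec v w - (if w \<in> V \<and> \<alpha> \<in> \<tau> w then m w v else 0))"
proof (cases "\<alpha> \<in> \<tau> v")
  case True then show ?thesis by (simp add: wg_basis_def)
next
  case False
  have fin: "finite {u\<in>V. \<alpha> \<in> \<tau> u}" using assms by simp
  have "(\<Sum>u\<in>{u\<in>V. \<alpha> \<in> \<tau> u}. cscale (m u v) (basis_vec u)) w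
      = (\<Sum>u\<in>{u\<in>V. \<alpha> \<in> \<tau> u}. if w = u then m u v else 0)"
    by (simp add: sum_fun_apply basis_vec_apply if_distrib cong: if_cong)
  also have "\<dots> = (if w \<in> V \<and> \<alpha> \<in> \<tau> w then m w v else 0)"
    using fin by (simp add: sum.delta)
  finally show ?thesis using False by (simp add: wg_basis_def)
qed

lemma wg_op_fix:
  assumes "finite V" "x \<in> CV V" "\<alpha> \<notin> \<tau> w"
  shows "wg_op V m \<tau> \<alpha> x w = x w"
proof -
  have "wg_op V m \<tau> \<alpha> x w = (\<Sum>v\<in>V. if w = v then x v else 0)"
    unfolding wg_op_apply[OF assms(1)]
    by (rule sum.cong) (use assms(3) in \<open>auto simp: wg_basis_apply[OF assms(1)] basis_vec_apply\<close>)
  also have "\<dots> = x w" using assms(1,2) by (simp add: sum.delta CV_def)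
  finally show ?thesis .
qed

lemma wg_op_neg:
  assumes "finite V" "x \<in> CV V" "\<forall>v. \<alpha> \<notin> \<tau> v \<longrightarrow> x v = 0"
  shows "wg_op V m \<tau> \<alpha> x = cscale (-1) x"
proof
  fix w
  have "wg_op V m \<tau> \<alpha> x w = (\<Sum>v\<in>V. if w = v then - x v else 0)"
    unfolding wg_op_apply[OF assms(1)]
    by (rule sum.cong) (use assms(3) in \<open>auto simp: wg_basis_apply[OF assms(1)] basis_vec_apply\<close>)
  also have "\<dots> = - x w" using assms(1,2) by (simp add: sum.delta CV_def)
  finally show "wg_op V m \<tau> \<alpha> x w = cscale (-1) x w" by simp
qed

lemma wg_op_CV:
  assumes "finite V" shows "wg_op V m \<tau> \<alpha> x \<in> CV V"
  unfolding CV_def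
  using assms by (auto simp: wg_op_apply wg_basis_apply basis_vec_apply intro!: sum.neutral)

lemma wg_op_cscale:
  assumes "finite V" shows "wg_op V m \<tau> \<alpha> (cscale c x) = cscale c (wg_op V m \<tau> \<alpha> x)"
  by (rule ext) (simp add: wg_op_apply[OF assms] sum_distrib_left mult.assoc)

lemma wg_op_sum:
  assumes "finite V" shows "wg_op V m \<tau> \<alpha> (\<Sum>g\<in>S. f g) = (\<Sum>g\<in>S. wg_op V m \<tau> \<alpha> (f g))"
  by (rule ext) (simp add: wg_op_apply[OF assms] sum_fun_apply sum_distrib_right sum.swap[of _ V])

lemma cscale_sum: "cscale c (\<Sum>g\<in>S. f g) = (\<Sum>g\<in>S. cscale c (f g))"
  by (rule ext) (simp add: sum_fun_apply sum_distrib_left)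

lemma refl_in_weyl': "\<alpha> \<in> A \<Longrightarrow> refl \<alpha> \<in> weyl_subgroup A"
  using weyl_subgroup.refl_comp[OF weyl_subgroup.id_in] by simp

lemma rho_CV:
  assumes rep: "W_graph_rep \<Delta> V m \<tau> \<rho>" and fin: "finite V"
  shows "g \<in> weyl_subgroup \<Delta> \<Longrightarrow> x \<in> CV V \<Longrightarrow> \<rho> g x \<in> CV V"
proof (induction rule: weyl_subgroup.induct)
  case id_in then show ?case using rep by (simp add: W_graph_rep_def id_def)
next
  case (refl_comp g \<alpha>)
  have "\<rho> (refl \<alpha> \<circ> g) x = \<rho> (refl \<alpha>) (\<rho> g x)"
    using rep refl_comp refl_in_weyl'[OF refl_comp(2)] by (simp add: W_graph_rep_def)
  also have "\<dots> = wg_op V m \<tau> \<alpha> (\<rho> g x)"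
    using rep refl_comp by (simp add: W_graph_rep_def)
  finally show ?case using wg_op_CV[OF fin] by (simp only:)
qed

lemma rho_step:
  assumes rep: "W_graph_rep \<Delta> V m \<tau> \<rho>" and fin: "finite V"
    and g: "g \<in> weyl_subgroup \<Delta>" and a: "\<alpha> \<in> \<Delta>" and x: "x \<in> CV V"
  shows "\<rho> (refl \<alpha> \<circ> g) x = wg_op V m \<tau> \<alpha> (\<rho> g x)"
proof -
  have "\<rho> (refl \<alpha> \<circ> g) x = \<rho> (refl \<alpha>) (\<rho> g x)"
    using rep g x refl_in_weyl'[OF a] by (simp add: W_graph_rep_def)
  also have "\<dots> = wg_op V m \<tau> \<alpha> (\<rho> g x)"
    using rep a rho_CV[OF rep fin g x] by (simp add: W_graph_rep_def)
  finally show ?thesis .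
qed

theorem proposition2p8:
  fixes \<Phi> \<Delta> A :: "(real^'n) set"
    and V :: "'v set" and m :: "'v \<Rightarrow> 'v \<Rightarrow> complex" and \<tau> :: "'v \<Rightarrow> (real^'n) set"
    and \<rho> :: "(real^'n \<Rightarrow> real^'n) \<Rightarrow> ('v \<Rightarrow> complex) \<Rightarrow> ('v \<Rightarrow> complex)"
  assumes "root_system \<Phi>" and "simple_system \<Phi> \<Delta>"
    and "weak_W_graph \<Delta> V m \<tau>"
    and "W_graph_rep \<Delta> V m \<tau> \<rho>"
    and "A \<subseteq> \<Delta>"
  shows "R_op A \<rho> ` CV V = module.span cscale (basis_vec ` {v\<in>V. A \<subseteq> \<tau> v})"
proof -
  have finPhi: "finite \<Phi>" and zPhi: "0 \<notin> \<Phi>" and cl: "\<forall>\<alpha>\<in>\<Phi>. \<forall>\<beta>\<in>\<Phi>. refl \<alpha> \<beta> \<in> \<Phi>"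
    using assms(1) by (auto simp: root_system_def)
  have DPhi: "\<Delta> \<subseteq> \<Phi>" using assms(2) by (simp add: simple_system_def)
  have finV: "finite V" using assms(3) by (simp add: weak_W_graph_def)
  note rep = assms(4)
  have AD: "A \<subseteq> \<Delta>" by fact
  have nz: "\<alpha> \<noteq> 0" if "\<alpha> \<in> \<Delta>" for \<alpha> using that DPhi zPhi by auto
  define WA where "WA = weyl_subgroup A"
  have WAD: "g \<in> weyl_subgroup \<Delta>" if "g \<in> WA" for g
    using weyl_mono[of g A \<Delta>] that AD by (simp add: WA_def)
  have finWA: "finite WA"
    using finite_subset[OF _ weyl_finite[OF DPhi zPhi finPhi cl]] WAD by blast
  have idWA: "id \<in> WA" by (simp add: WA_def weyl_subgroup.id_in)
  have lin: "linear g" if "g \<in> weyl_subgroup \<Delta>" for g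
    using weyl_props[OF that DPhi zPhi cl] by blast
  have sstep: "sgn_W (refl \<alpha> \<circ> g) = - sgn_W g" if "g \<in> WA" "\<alpha> \<in> A" for g \<alpha>
    using sgn_step[OF lin[OF WAD[OF that(1)]] nz] that AD by blast
  have spm: "sgn_W g = 1 \<or> sgn_W g = -1" if "g \<in> WA" for g
    using that unfolding WA_def
  proof (induction rule: weyl_subgroup.induct)
    case id_in
    have "sgn_W (id :: real^'n \<Rightarrow> real^'n) = 1" by (rule sgn_id)
    then show ?case by (simp add: id_def)
  next
    case (refl_comp g \<alpha>)
    have e: "sgn_W (refl \<alpha> \<circ> g) = - sgn_W g"
      using sstep[of g \<alpha>] refl_comp(1,2) unfolding WA_def by blast
    show ?case using e refl_comp.IH by linarith
  qed
  define T where "T = {v\<in>V. A \<subseteq> \<tau> v}"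
  have finT: "finite T" using finV by (simp add: T_def)
  define s where "s g = complex_of_real (sgn_W g)" for g :: "real^'n \<Rightarrow> real^'n"
  have R_eq: "R_op A \<rho> x = cscale (1 / of_nat (card WA)) (\<Sum>g\<in>WA. cscale (s g) (\<rho> g x))" for x
    by (simp add: R_op_def WA_def s_def)
  have Npos: "card WA \<noteq> 0" using finWA idWA by auto
  have "R_op A \<rho> ` CV V = {x. \<forall>u. u \<notin> T \<longrightarrow> x u = 0}"
  proof (rule set_eqI, rule iffI)
    fix y assume "y \<in> R_op A \<rho> ` CV V"
    then obtain x where x: "x \<in> CV V" and y: "y = R_op A \<rho> x" by blast
    define F where "F h = cscale (s h) (\<rho> h x)" for h
    define Y where "Y = (\<Sum>g\<in>WA. F g)"
    have yY: "y = cscale (1 / of_nat (card WA)) Y" by (simp add: y R_eq Y_def F_def)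
    have YCV: "Y \<in> CV V"
      unfolding CV_def
    proof (intro CollectI allI impI)
      fix u assume "u \<notin> V"
      then have "\<rho> g x u = 0" if "g \<in> WA" for g
        using rho_CV[OF rep finV WAD[OF that] x] by (simp add: CV_def)
      then show "Y u = 0" by (simp add: Y_def F_def sum_fun_apply)
    qed
    have Yneg: "wg_op V m \<tau> \<alpha> Y = cscale (-1) Y" if a: "\<alpha> \<in> A" for \<alpha>
    proof -
      have aD: "\<alpha> \<in> \<Delta>" using a AD by auto
      have rr: "refl \<alpha> \<circ> (refl \<alpha> \<circ> g) = g" for g
        using refl_refl[OF nz[OF aD]] by (auto simp: fun_eq_iff)
      have bij: "bij_betw (\<lambda>g. refl \<alpha> \<circ> g) WA WA"
      proof (rule bij_betwI[where g = "\<lambda>g. refl \<alpha> \<circ> g"])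
        show "(\<lambda>g. refl \<alpha> \<circ> g) \<in> WA \<rightarrow> WA" "(\<lambda>g. refl \<alpha> \<circ> g) \<in> WA \<rightarrow> WA"
          using a by (auto simp: WA_def intro: weyl_subgroup.refl_comp)
      qed (simp_all add: rr)
      have "wg_op V m \<tau> \<alpha> Y = (\<Sum>g\<in>WA. cscale (s g) (wg_op V m \<tau> \<alpha> (\<rho> g x)))"
        by (simp add: Y_def F_def wg_op_sum[OF finV] wg_op_cscale[OF finV])
      also have "\<dots> = (\<Sum>g\<in>WA. cscale (-1) (F (refl \<alpha> \<circ> g)))"
      proof (rule sum.cong[OF refl])
        fix g assume g: "g \<in> WA"
        have "wg_op V m \<tau> \<alpha> (\<rho> g x) = \<rho> (refl \<alpha> \<circ> g) x"
          using rho_step[OF rep finV WAD[OF g] aD x] by simp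
        moreover have "s (refl \<alpha> \<circ> g) = - s g" using sstep[OF g a] by (simp add: s_def)
        ultimately show "cscale (s g) (wg_op V m \<tau> \<alpha> (\<rho> g x)) = cscale (-1) (F (refl \<alpha> \<circ> g))"
          by (simp add: F_def cscale_def fun_eq_iff)
      qed
      also have "\<dots> = cscale (-1) (\<Sum>g\<in>WA. F (refl \<alpha> \<circ> g))"
        by (simp add: cscale_sum)
      also have "(\<Sum>g\<in>WA. F (refl \<alpha> \<circ> g)) = Y"
        unfolding Y_def by (rule sum.reindex_bij_betw[OF bij])
      finally show ?thesis .
    qed
    show "y \<in> {x. \<forall>u. u \<notin> T \<longrightarrow> x u = 0}"
    proof (intro CollectI allI impI)
      fix u assume u: "u \<notin> T"
      have "Y u = 0"
      proof (cases "u \<in> V")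
        case False then show ?thesis using YCV by (simp add: CV_def)
      next
        case True
        then obtain \<alpha> where a: "\<alpha> \<in> A" "\<alpha> \<notin> \<tau> u" using u by (auto simp: T_def)
        have "Y u = wg_op V m \<tau> \<alpha> Y u" using wg_op_fix[where \<tau>=\<tau> and w=u and m=m, OF finV YCV a(2)] by simp
        also have "\<dots> = - Y u" using Yneg[OF a(1)] by simp
        finally show ?thesis by simp
      qed
      then show "y u = 0" by (simp add: yY)
    qed
  next
    fix x :: "'v \<Rightarrow> complex" assume "x \<in> {x. \<forall>u. u \<notin> T \<longrightarrow> x u = 0}"
    then have xT: "\<And>u. u \<notin> T \<Longrightarrow> x u = 0" by blast
    have xCV: "x \<in> CV V" using xT by (auto simp: CV_def T_def)
    have act: "\<rho> g x = cscale (s g) x" if "g \<in> WA" for g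
      using that unfolding WA_def
    proof (induction rule: weyl_subgroup.induct)
      case id_in
      have "sgn_W (id :: real^'n \<Rightarrow> real^'n) = 1" by (rule sgn_id)
      moreover have "\<rho> id x = x" using rep xCV by (simp add: W_graph_rep_def)
      ultimately show ?case by (simp add: s_def cscale_def id_def)
    next
      case (refl_comp g \<alpha>)
      have gW: "g \<in> WA" using refl_comp by (simp add: WA_def)
      have aD: "\<alpha> \<in> \<Delta>" using refl_comp AD by auto
      have xneg: "wg_op V m \<tau> \<alpha> x = cscale (-1) x"
        by (rule wg_op_neg[OF finV xCV]) (use xT refl_comp(2) in \<open>auto simp: T_def\<close>)
      have "\<rho> (refl \<alpha> \<circ> g) x = wg_op V m \<tau> \<alpha> (\<rho> g x)"
        using rho_step[OF rep finV WAD[OF gW] aD xCV] .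
      also have "\<dots> = cscale (s g) (cscale (-1) x)"
        unfolding refl_comp(3) wg_op_cscale[OF finV] xneg by (rule refl)
      also have "\<dots> = cscale (s (refl \<alpha> \<circ> g)) x"
        using sstep[OF gW refl_comp(2)] by (simp add: s_def cscale_def fun_eq_iff)
      finally show ?case .
    qed
    have "R_op A \<rho> x = x"
    proof
      fix w
      have "R_op A \<rho> x w = (1 / of_nat (card WA)) * (\<Sum>g\<in>WA. s g * (s g * x w))"
        by (simp add: R_eq act sum_fun_apply cong: sum.cong)
      also have "(\<Sum>g\<in>WA. s g * (s g * x w)) = (\<Sum>g\<in>WA. x w)"
      proof (rule sum.cong[OF refl])
        fix g assume "g \<in> WA"
        then show "s g * (s g * x w) = x w" using spm[of g] by (auto simp: s_def)
      qed
      also have "\<dots> = of_nat (card WA) * x w" by simp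
      finally show "R_op A \<rho> x w = x w" using Npos by simp
    qed
    then show "x \<in> R_op A \<rho> ` CV V" using xCV by (metis image_eqI)
  qed
  then show ?thesis using span_char[OF finT] by (simp add: T_def)
qed

end
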